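(* Consider online non-preemptive scheduling of jobs on $k\ge1$ identical machines, where each job $j$ has a release time $r_j$ and a processing time $p_j$ known at release, and the flow time of a job is its completion time minus its release time. Let FIFO be the algorithm that, whenever some machine is idle and some released job is not yet started, starts the released unstarted job with the earliest release time on an idle machine. Let $P$ be the maximum processing time of all jobs and $D\ge0$. If for any two time points $a\le b$ the total processing time of jobs released in $[a,b]$ is at most $k(b-a)+D$, then the maximum flow time achieved by FIFO is at most $\frac{D}{k}+\frac{2(k-1)P}{k}$. *)

theory Defs
  imports Main "HOL-Library.Library"
begin

text \<open>A non-preemptive schedule on k machines assigns each job a start time s j and a
machine m j (machines are 0,...,k-1); job j runs on m j during [s j, s j + p j).\<close>

definition valid_schedule ::
  "nat \<Rightarrow> 'j set \<Rightarrow> ('j \<Rightarrow> real) \<Rightarrow> ('j \<Rightarrow> real) \<Rightarrow> ('j \<Rightarrow> real) \<Rightarrow> ('j \<Rightarrow> nat) \<Rightarrow> bool" where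
  "valid_schedule k J r p s m \<longleftrightarrow>
     (\<forall>j\<in>J. r j \<le> s j \<and> m j < k) \<and>
     (\<forall>j\<in>J. \<forall>j'\<in>J. j \<noteq> j' \<and> m j = m j' \<longrightarrow> s j + p j \<le> s j' \<or> s j' + p j' \<le> s j)"

definition busy ::
  "'j set \<Rightarrow> ('j \<Rightarrow> real) \<Rightarrow> ('j \<Rightarrow> real) \<Rightarrow> ('j \<Rightarrow> nat) \<Rightarrow> nat \<Rightarrow> real \<Rightarrow> bool" where
  "busy J p s m i t \<longleftrightarrow> (\<exists>j\<in>J. m j = i \<and> s j \<le> t \<and> t < s j + p j)"

text \<open>A schedule is a possible run of FIFO (with arbitrary tie-breaking) iff it is
valid, never leaves a machine idle while a released job is waiting, and starts jobs
in order of release time (a job released strictly earlier never starts later).\<close>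
definition fifo_schedule ::
  "nat \<Rightarrow> 'j set \<Rightarrow> ('j \<Rightarrow> real) \<Rightarrow> ('j \<Rightarrow> real) \<Rightarrow> ('j \<Rightarrow> real) \<Rightarrow> ('j \<Rightarrow> nat) \<Rightarrow> bool" where
  "fifo_schedule k J r p s m \<longleftrightarrow>
     valid_schedule k J r p s m \<and>
     (\<forall>t. (\<exists>j\<in>J. r j \<le> t \<and> t < s j) \<longrightarrow> (\<forall>i<k. busy J p s m i t)) \<and>
     (\<forall>j\<in>J. \<forall>j'\<in>J. r j < r j' \<longrightarrow> s j \<le> s j')"

definition flow_time :: "('j \<Rightarrow> real) \<Rightarrow> ('j \<Rightarrow> real) \<Rightarrow> ('j \<Rightarrow> real) \<Rightarrow> 'j \<Rightarrow> real" where
  "flow_time r p s j = s j + p j - r j"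

end

theory Submission
  imports Defs
begin

lemma cover:
  fixes s p :: "'j \<Rightarrow> real" and y :: real
  assumes "finite A"
  shows "\<forall>x. (\<forall>t. x \<le> t \<and> t < y \<longrightarrow> (\<exists>j\<in>A. s j \<le> t \<and> t < s j + p j)) \<longrightarrow>
    y - x \<le> (\<Sum>j\<in>A. max 0 (min (s j + p j) y - max (s j) x))"
  using assms
proof (induction A rule: finite_remove_induct)
  case empty
  show ?case
  proof (intro allI impI)
    fix x assume "\<forall>t. x \<le> t \<and> t < y \<longrightarrow> (\<exists>j\<in>{}. s j \<le> t \<and> t < s j + p j)"
    then have "\<not> x < y" by auto
    then show "y - x \<le> (\<Sum>j\<in>{}. max 0 (min (s j + p j) y - max (s j) x))" by simp
  qed
next
  case (remove A)
  show ?case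
  proof (intro allI impI)
    fix x assume cov: "\<forall>t. x \<le> t \<and> t < y \<longrightarrow> (\<exists>j\<in>A. s j \<le> t \<and> t < s j + p j)"
    let ?f = "\<lambda>x j. max 0 (min (s j + p j) y - max (s j) x)"
    have nn: "\<And>x. 0 \<le> sum (?f x) B" for B by (rule sum_nonneg) simp
    show "y - x \<le> sum (?f x) A"
    proof (cases "x < y")
      case False
      then show ?thesis using nn[of x A] by linarith
    next
      case True
      then obtain a where a: "a \<in> A" "s a \<le> x" "x < s a + p a" using cov by auto
      have split: "sum (?f x) A = ?f x a + sum (?f x) (A - {a})"
        using a(1) remove(1) by (simp add: sum.remove)
      show ?thesis
      proof (cases "y \<le> s a + p a")
        case True
        then have "?f x a = y - x" using a \<open>x < y\<close> by simp
        then show ?thesis using split nn[of x "A - {a}"] by linarith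
      next
        case False
        let ?d = "s a + p a"
        have cov2: "\<forall>t. ?d \<le> t \<and> t < y \<longrightarrow> (\<exists>j\<in>A - {a}. s j \<le> t \<and> t < s j + p j)"
        proof (intro allI impI)
          fix t assume t: "?d \<le> t \<and> t < y"
          have "x \<le> t" using t a by linarith
          then obtain j where "j \<in> A" "s j \<le> t" "t < s j + p j" using cov t by blast
          then show "\<exists>j\<in>A - {a}. s j \<le> t \<and> t < s j + p j" using t by (intro bexI[of _ j]) auto
        qed
        have ih: "y - ?d \<le> sum (?f ?d) (A - {a})"
          using remove(4)[OF a(1)] cov2 by blast
        have mono: "sum (?f ?d) (A - {a}) \<le> sum (?f x) (A - {a})"
          using a by (intro sum_mono) auto
        have "?f x a = ?d - x" using a False by simp
        then show ?thesis using split ih mono by linarith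
      qed
    qed
  qed
qed


theorem lemma4p6:
  fixes k :: nat and J :: "'j set" and r p s :: "'j \<Rightarrow> real" and m :: "'j \<Rightarrow> nat"
    and D :: real
  assumes "k \<ge> 1" and "finite J" and "J \<noteq> {}"
    and "\<forall>j\<in>J. p j \<ge> 0"
    and "D \<ge> 0"
    and "\<forall>a b. a \<le> b \<longrightarrow> (\<Sum>j\<in>{j\<in>J. a \<le> r j \<and> r j \<le> b}. p j) \<le> real k * (b - a) + D"
    and "fifo_schedule k J r p s m"
  shows "(MAX j\<in>J. flow_time r p s j) \<le> D / real k + 2 * (real k - 1) * (MAX j\<in>J. p j) / real k"
proof -
  have valid: "valid_schedule k J r p s m"
    and work: "\<forall>t. (\<exists>j\<in>J. r j \<le> t \<and> t < s j) \<longrightarrow> (\<forall>i<k. busy J p s m i t)"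
    and ord: "\<forall>j\<in>J. \<forall>j'\<in>J. r j < r j' \<longrightarrow> s j \<le> s j'"
    using assms(7) unfolding fifo_schedule_def by auto
  have rs: "\<And>j. j \<in> J \<Longrightarrow> r j \<le> s j" and mk: "\<And>j. j \<in> J \<Longrightarrow> m j < k"
    using valid unfolding valid_schedule_def by auto
  have disj: "\<And>j j'. j \<in> J \<Longrightarrow> j' \<in> J \<Longrightarrow> j \<noteq> j' \<Longrightarrow> m j = m j' \<Longrightarrow> s j + p j \<le> s j' \<or> s j' + p j' \<le> s j"
    using valid unfolding valid_schedule_def by blast
  have pnn: "\<And>j. j \<in> J \<Longrightarrow> 0 \<le> p j" using assms(4) by auto
  define P where "P = (MAX j\<in>J. p j)"
  have pP: "\<And>j. j \<in> J \<Longrightarrow> p j \<le> P" using assms(2) by (simp add: P_def)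
  have P0: "0 \<le> P" using assms(3) pP pnn by force
  have kpos: "real k > 0" using assms(1) by simp
  have key: "real k * (s j - r j) \<le> D - p j + (real k - 1) * P" if jJ: "j \<in> J" for j
  proof (cases "s j \<le> r j")
    case True
    have "p j \<le> (\<Sum>j'\<in>{j'\<in>J. r j \<le> r j' \<and> r j' \<le> r j}. p j')"
      using jJ assms(2) pnn by (intro member_le_sum) auto
    also have "\<dots> \<le> D" using assms(6)[rule_format, of "r j" "r j"] by simp
    finally have "p j \<le> D" .
    moreover have "0 \<le> (real k - 1) * P" using assms(1) P0 by simp
    moreover have "real k * (s j - r j) \<le> 0" using True kpos by (simp add: mult_nonneg_nonpos)
    ultimately show ?thesis by linarith
  next
    case False
    then have rlt: "r j < s j" by simp
    define B where "B = {t. t \<le> r j \<and> (\<exists>i<k. \<not> busy J p s m i t)}"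
    define t0 where "t0 = min (r j) (Min (s ` J) - 1)"
    have "t0 \<in> B"
    proof -
      have "\<And>j'. j' \<in> J \<Longrightarrow> Min (s ` J) \<le> s j'" using assms(2) by simp
      then have "\<not> busy J p s m 0 t0" unfolding busy_def t0_def by force
      then show ?thesis using assms(1) unfolding B_def t0_def by (auto intro!: exI[of _ 0])
    qed
    then have Bne: "B \<noteq> {}" by auto
    have Bbdd: "bdd_above B" unfolding B_def by (rule bdd_aboveI[of _ "r j"]) auto
    define b0 where "b0 = Sup B"
    have b0r: "b0 \<le> r j" unfolding b0_def using Bne by (intro cSup_least) (auto simp: B_def)
    have busy_after: "busy J p s m i t" if "b0 < t" "t < s j" "i < k" for i t
    proof (cases "t \<le> r j")
      case True
      have "t \<notin> B" using that(1) cSup_upper[OF _ Bbdd] unfolding b0_def by force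
      then show ?thesis using True that(3) unfolding B_def by auto
    next
      case False
      then have "r j \<le> t" by simp
      then show ?thesis using work jJ that by blast
    qed
    show ?thesis
    proof (rule field_le_epsilon)
      fix e :: real assume e: "0 < e"
      define \<delta> where "\<delta> = e / (2 * real k)"
      have \<delta>: "0 < \<delta>" using e kpos by (simp add: \<delta>_def)
      have "b0 - \<delta> < Sup B" using \<delta> by (simp add: b0_def)
      then obtain b where bB: "b \<in> B" and bgt: "b0 - \<delta> < b" using less_cSup_iff[OF Bne Bbdd] by auto
      have bb0: "b \<le> b0" unfolding b0_def using cSup_upper[OF bB Bbdd] .
      have br: "b \<le> r j" using bB by (simp add: B_def)
      obtain i0 where i0: "i0 < k" "\<not> busy J p s m i0 b" using bB by (auto simp: B_def)
      define x' where "x' = min (b0 + \<delta>) ((b0 + s j) / 2)"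
      have x'1: "b0 < x'" "x' < s j" "x' \<le> b0 + \<delta>" using \<delta> b0r rlt unfolding x'_def by (auto simp: min_def)
      define ov where "ov = (\<lambda>j'. max 0 (min (s j' + p j') (s j) - max (s j') x'))"
      have ovp: "ov j' \<le> p j'" if "j' \<in> J" for j'
        using pnn[OF that] unfolding ov_def by (simp add: max_def min_def)
      have mach: "s j - x' \<le> (\<Sum>j'\<in>{j'\<in>J. m j' = i}. ov j')" if "i < k" for i
      proof -
        have "\<forall>t. x' \<le> t \<and> t < s j \<longrightarrow> (\<exists>j'\<in>{j'\<in>J. m j' = i}. s j' \<le> t \<and> t < s j' + p j')"
        proof (intro allI impI)
          fix t assume t: "x' \<le> t \<and> t < s j"
          then have "b0 < t" using x'1 by linarith
          then have "busy J p s m i t" using busy_after t that by blast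
          then show "\<exists>j'\<in>{j'\<in>J. m j' = i}. s j' \<le> t \<and> t < s j' + p j'"
            unfolding busy_def by blast
        qed
        then show ?thesis using cover[of "{j'\<in>J. m j' = i}" "s j" s p] assms(2) unfolding ov_def by auto
      qed
      have "real k * (s j - x') = (\<Sum>i<k. s j - x')" by simp
      also have "\<dots> \<le> (\<Sum>i<k. \<Sum>j'\<in>{j'\<in>J. m j' = i}. ov j')" using mach by (intro sum_mono) auto
      also have "\<dots> = (\<Sum>j'\<in>J. ov j')" using assms(2) mk by (intro sum.group) auto
      finally have S1: "real k * (s j - x') \<le> (\<Sum>j'\<in>J. ov j')" .
      define C where "C = {j'\<in>J. s j' \<le> b}"
      define G where "G = {j'\<in>J. b < s j'}"
      have JCG: "J = C \<union> G" "C \<inter> G = {}" by (auto simp: C_def G_def)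
      have finCG: "finite C" "finite G" using assms(2) by (auto simp: C_def G_def)
      have S2: "(\<Sum>j'\<in>J. ov j') = (\<Sum>j'\<in>C. ov j') + (\<Sum>j'\<in>G. ov j')"
        using JCG finCG by (simp add: sum.union_disjoint)
      define C' where "C' = {j'\<in>C. x' < s j' + p j'}"
      have "(\<Sum>j'\<in>C. ov j') = (\<Sum>j'\<in>C'. ov j')"
        using finCG by (intro sum.mono_neutral_right) (auto simp: C'_def ov_def)
      also have "\<dots> \<le> (\<Sum>j'\<in>C'. P)"
        using pP ovp by (intro sum_mono) (force simp: C'_def C_def intro: order_trans)
      also have "\<dots> = real (card C') * P" by simp
      also have "\<dots> \<le> (real k - 1) * P"
      proof -
        have inj: "inj_on m C'"
        proof (rule inj_onI)
          fix j1 j2 assume j1: "j1 \<in> C'" and j2: "j2 \<in> C'" and eq: "m j1 = m j2"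
          show "j1 = j2"
          proof (rule ccontr)
            assume "j1 \<noteq> j2"
            then have "s j1 + p j1 \<le> s j2 \<or> s j2 + p j2 \<le> s j1"
              using disj j1 j2 eq by (auto simp: C'_def C_def)
            then show False using j1 j2 x'1 bb0 by (auto simp: C'_def C_def)
          qed
        qed
        have "m ` C' \<subseteq> {..<k} - {i0}"
        proof
          fix i assume "i \<in> m ` C'"
          then obtain j' where j': "j' \<in> C'" "i = m j'" by auto
          have "m j' \<noteq> i0"
          proof
            assume "m j' = i0"
            then have "busy J p s m i0 b" using j' x'1 bb0 unfolding busy_def C'_def C_def by force
            then show False using i0 by simp
          qed
          then show "i \<in> {..<k} - {i0}" using j' mk by (auto simp: C'_def C_def)
        qed
        then have "card C' \<le> card ({..<k} - {i0})" using inj by (intro card_inj_on_le) auto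
        also have "\<dots> = k - 1" using i0 by simp
        finally have "real (card C') \<le> real k - 1" using assms(1) by linarith
        then show ?thesis using P0 by (intro mult_right_mono) auto
      qed
      finally have SC: "(\<Sum>j'\<in>C. ov j') \<le> (real k - 1) * P" .
      define G' where "G' = {j'\<in>G. s j' < s j}"
      define R where "R = {j'\<in>J. b \<le> r j' \<and> r j' \<le> r j}"
      have finR: "finite R" using assms(2) by (simp add: R_def)
      have G'R: "G' \<subseteq> R - {j}"
      proof
        fix j' assume j': "j' \<in> G'"
        have "r j' > b"
        proof (rule ccontr)
          assume "\<not> r j' > b"
          then have "r j' \<le> b" by simp
          moreover have "j' \<in> J" "b < s j'" using j' by (auto simp: G'_def G_def)
          ultimately have "busy J p s m i0 b" using work i0 by blast
          then show False using i0 by simp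
        qed
        moreover have "r j' \<le> r j" using ord j' jJ by (force simp: G'_def G_def)
        ultimately show "j' \<in> R - {j}" using j' by (auto simp: R_def G'_def G_def)
      qed
      have "(\<Sum>j'\<in>G. ov j') = (\<Sum>j'\<in>G'. ov j')"
        using finCG by (intro sum.mono_neutral_right) (auto simp: G'_def ov_def)
      also have "\<dots> \<le> (\<Sum>j'\<in>G'. p j')"
        using ovp by (intro sum_mono) (auto simp: G'_def G_def)
      also have "\<dots> \<le> (\<Sum>j'\<in>R - {j}. p j')"
        using G'R finR pnn by (intro sum_mono2) (auto simp: R_def)
      also have "\<dots> = (\<Sum>j'\<in>R. p j') - p j"
        using finR jJ br by (subst sum_diff1) (auto simp: R_def)
      also have "(\<Sum>j'\<in>R. p j') \<le> real k * (r j - b) + D"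
        using assms(6) br unfolding R_def by blast
      finally have SG: "(\<Sum>j'\<in>G. ov j') \<le> real k * (r j - b) + D - p j" by simp
      have "real k * (x' - b) \<le> real k * (2 * \<delta>)"
        using x'1 bgt kpos by (intro mult_left_mono) auto
      also have "\<dots> = e" using kpos by (simp add: \<delta>_def)
      finally have E: "real k * (x' - b) \<le> e" .
      have "real k * (s j - r j) = real k * (s j - x') + real k * (x' - b) - real k * (r j - b)"
        by (simp add: algebra_simps)
      then show "real k * (s j - r j) \<le> D - p j + (real k - 1) * P + e"
        using S1 S2 SC SG E by linarith
    qed
  qed
  have fl: "flow_time r p s j \<le> D / real k + 2 * (real k - 1) * P / real k" if jJ: "j \<in> J" for j
  proof -
    have "real k * flow_time r p s j = real k * (s j - r j) + real k * p j"
      by (simp add: flow_time_def algebra_simps)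
    also have "\<dots> \<le> D - p j + (real k - 1) * P + real k * p j" using key[OF jJ] by linarith
    also have "\<dots> = D + (real k - 1) * p j + (real k - 1) * P" by (simp add: algebra_simps)
    also have "\<dots> \<le> D + (real k - 1) * P + (real k - 1) * P"
    proof -
      have "(real k - 1) * p j \<le> (real k - 1) * P"
        using mult_left_mono[OF pP[OF jJ], of "real k - 1"] assms(1) by simp
      then show ?thesis by linarith
    qed
    also have "\<dots> = D + 2 * (real k - 1) * P" by simp
    finally have "real k * flow_time r p s j \<le> D + 2 * (real k - 1) * P" .
    then have "flow_time r p s j \<le> (D + 2 * (real k - 1) * P) / real k"
      using kpos by (subst pos_le_divide_eq) (auto simp: mult.commute)
    then show ?thesis by (simp add: add_divide_distrib)
  qed
  show ?thesis unfolding P_def[symmetric] using assms(2,3) fl by (simp add: Max_le_iff)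
qed

end
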